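(* Let $n\ge 1$ be an integer. Every set $A\subseteq\mathbb{Z}_{2^n}$ with $|A|=2^{n-1}+1$ satisfies $\mathrm{ST}(A)\ge 3\cdot 2^{n-1}$.
   Context: For $A\subseteq\mathbb{Z}_{2^n}$, $\mathrm{ST}(A)=|\{(x,y,z)\in A^3: x+y=z \text{ in } \mathbb{Z}_{2^n}\}|$ is the number of (ordered) Schur triples in $A$; in particular $(x,y,z)$ and $(y,x,z)$ are counted separately when $x\ne y$, and $x=y$ is allowed. *)

theory Defs
  imports Main
begin

text \<open>Z_(2^n) is represented by the residues {0..<2^n} (nat), with addition mod 2^n.
  ST counts ordered triples (x,y,z) in A^3 with x + y = z in Z_(2^n).\<close>

definition schur_triples :: "nat \<Rightarrow> nat set \<Rightarrow> nat" where
  "schur_triples n A = card {(x, y, z). x \<in> A \<and> y \<in> A \<and> z \<in> A \<and> (x + y) mod 2 ^ n = z}"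

end

theory Submission imports Defs "HOL-Number_Theory.Cong" begin

lemma pow2_odd_decomp:
  fixes x :: nat assumes "x > 0" shows "\<exists>v u. x = 2^v * u \<and> odd u"
  using assms
proof (induction x rule: less_induct)
  case (less x)
  show ?case
  proof (cases "odd x")
    case True then show ?thesis by (rule_tac x=0 in exI) auto
  next
    case False
    then obtain x' where x': "x = 2 * x'" by auto
    with less.prems have "x' < x" "x' > 0" by auto
    with less.IH obtain v u where "x' = 2^v*u" "odd u" by blast
    then show ?thesis using x' by (rule_tac x="Suc v" in exI) auto
  qed
qed

lemma shift_card:
  fixes N x :: nat and B :: "nat set"
  assumes "0 < N" "B \<subseteq> {0..<N}"
  shows "card {y\<in>{0..<N}. (x + y) mod N \<in> B} = card B"
proof -
  let ?S = "{y\<in>{0..<N}. (x + y) mod N \<in> B}"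
  let ?s = "\<lambda>y. (x + y) mod N"
  have inj: "inj_on ?s ?S"
  proof (rule inj_onI)
    fix a b assume a: "a \<in> ?S" and b: "b \<in> ?S" and e: "?s a = ?s b"
    have "[x + a = x + b] (mod N)" using e by (simp add: cong_def)
    then have "[a = b] (mod N)" by (simp add: cong_add_lcancel_nat)
    then show "a = b" using a b by (simp add: cong_def)
  qed
  have img: "?s ` ?S = B"
  proof
    show "?s ` ?S \<subseteq> B" by auto
    show "B \<subseteq> ?s ` ?S"
    proof
      fix z assume z: "z \<in> B"
      then have zN: "z < N" using assms by auto
      define w where "w = (z + (N - x mod N)) mod N"
      have "w < N" using assms unfolding w_def by simp
      moreover have "?s w = z"
      proof -
        have "?s w = (x + (z + (N - x mod N))) mod N" unfolding w_def by (simp add: mod_add_right_eq)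
        also have "x + (z + (N - x mod N)) = z + N + (x div N) * N"
          using div_mult_mod_eq[of x N] mod_less_divisor[OF assms(1), of x] by linarith
        also have "(z + N + (x div N) * N) mod N = z" using zN by simp
        finally show ?thesis .
      qed
      ultimately show "z \<in> ?s ` ?S" using z by (metis (mono_tags, lifting) atLeastLessThan_iff image_eqI le0 mem_Collect_eq)
    qed
  qed
  show ?thesis using card_image[OF inj] img by simp
qed

lemma closed_mult:
  fixes N x :: nat and B :: "nat set"
  assumes "0 < N" "B \<subseteq> {0..<N}" "\<forall>y\<in>B. (y + x) mod N \<in> B"
  shows "\<forall>y\<in>B. (y + k * x) mod N \<in> B"
proof (induction k)
  case 0
  then show ?case using assms(2) by auto
next
  case (Suc k)
  show ?case
  proof
    fix y assume y: "y \<in> B"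
    have "(y + Suc k * x) mod N = ((y + k * x) mod N + x) mod N"
      by (metis mod_add_left_eq add.assoc add.commute mult_Suc)
    then show "(y + Suc k * x) mod N \<in> B" using Suc y assms(3) by auto
  qed
qed

lemma closed_even:
  fixes n x :: nat and B :: "nat set"
  assumes "B \<subseteq> {0..<2^n}" "0 < x" "x < 2^n" "\<forall>y\<in>B. (y + x) mod 2^n \<in> B"
  shows "even (card B)"
proof -
  obtain v u where vu: "x = 2^v * u" "odd u" using pow2_odd_decomp[OF assms(2)] by blast
  have "u \<ge> 1" using vu(2) by (cases u) auto
  then have "2^v \<le> x" using vu by simp
  then have "2^v < (2::nat)^n" using assms(3) by linarith
  then have vn: "v < n" by simp
  obtain w where w: "u = 2*w + 1" using vu(2) oddE by blast
  define m where "m = (2::nat)^(n-1)"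
  have Nm: "(2::nat)^n = 2*m" unfolding m_def using vn by (cases n) auto
  have "2^(n-1-v) * x = 2^(n-1) * u" 
  proof -
    have "n-1-v+v = n-1" using vn by simp
    then show ?thesis unfolding vu by (metis mult.assoc power_add)
  qed
  also have "\<dots> = 2^n * w + m" unfolding w m_def Nm[unfolded m_def] by (simp add: algebra_simps)
  finally have kx: "2^(n-1-v) * x = 2^n * w + m" .
  have cl: "\<forall>y\<in>B. (y + m) mod 2^n \<in> B"
  proof
    fix y assume y: "y \<in> B"
    have "(y + 2^(n-1-v) * x) mod 2^n \<in> B"
      using closed_mult[OF _ assms(1) assms(4)] y by simp
    also have "(y + 2^(n-1-v) * x) mod 2^n = (y + m) mod 2^n" 
    proof -
      have "y + (2^n * w + m) = (y + m) + w * 2^n" by simp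
      then show ?thesis unfolding kx by (metis mod_mult_self1)
    qed
    finally show "(y + m) mod 2^n \<in> B" .
  qed
  define B1 where "B1 = {y\<in>B. y < m}"
  define B2 where "B2 = {y\<in>B. m \<le> y}"
  have fin: "finite B" using assms(1) finite_subset by blast
  have split: "B = B1 \<union> B2" "B1 \<inter> B2 = {}" unfolding B1_def B2_def by auto
  have "(\<lambda>y. y + m) ` B1 = B2"
  proof
    show "(\<lambda>y. y + m) ` B1 \<subseteq> B2"
    proof
      fix z assume "z \<in> (\<lambda>y. y + m) ` B1"
      then obtain y where y: "y \<in> B" "y < m" "z = y + m" unfolding B1_def by auto
      then have "(y + m) mod 2^n = y + m" using Nm by simp
      then show "z \<in> B2" using cl y unfolding B2_def by force
    qed
    show "B2 \<subseteq> (\<lambda>y. y + m) ` B1"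
    proof
      fix z assume "z \<in> B2"
      then have z: "z \<in> B" "m \<le> z" unfolding B2_def by auto
      then have "z < 2*m" using assms(1) Nm by auto
      then have "(z + m) mod 2^n = z - m" 
      proof -
        have "z + m = (z - m) + 1 * (2*m)" using z by simp
        then show ?thesis unfolding Nm using \<open>z < 2*m\<close> by (metis mod_mult_self1 mod_less less_imp_diff_less)
      qed
      then have "z - m \<in> B1" using cl z \<open>z < 2*m\<close> unfolding B1_def by force
      then show "z \<in> (\<lambda>y. y + m) ` B1" using z by (metis image_eqI le_add_diff_inverse2)
    qed
  qed
  moreover have "inj_on (\<lambda>y. y + m) B1" by simp
  ultimately have "card B2 = card B1" using card_image by blast
  moreover have "card B = card B1 + card B2" using split fin
    by (metis card_Un_disjoint finite_Un)
  ultimately show ?thesis by simp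
qed

lemma card_as_sum:
  assumes "finite B" shows "card {y\<in>B. P y} = (\<Sum>y\<in>B. if P y then 1 else (0::nat))"
  using assms by (simp add: sum.If_cases Int_def conj_commute)

lemma f_eq:
  fixes N x :: nat and A B :: "nat set"
  assumes "0 < N" "A \<subseteq> {0..<N}" "B = {0..<N} - A"
  shows "card {y\<in>A. (x + y) mod N \<in> A} + card B = card A + card {y\<in>B. (x + y) mod N \<in> B}"
proof -
  have finA: "finite A" using assms(2) finite_subset by blast
  have finB: "finite B" using assms(3) by simp
  have BU: "B \<subseteq> {0..<N}" using assms(3) by auto
  have e1: "A = {y\<in>A. (x + y) mod N \<in> A} \<union> {y\<in>A. (x + y) mod N \<in> B}"
    using assms by auto
  have c1: "card A = card {y\<in>A. (x + y) mod N \<in> A} + card {y\<in>A. (x + y) mod N \<in> B}"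
    by (subst e1, rule card_Un_disjoint) (use finA assms(3) in auto)
  have e2: "{y\<in>{0..<N}. (x + y) mod N \<in> B} = {y\<in>A. (x + y) mod N \<in> B} \<union> {y\<in>B. (x + y) mod N \<in> B}"
    using assms by auto
  have c2: "card B = card {y\<in>A. (x + y) mod N \<in> B} + card {y\<in>B. (x + y) mod N \<in> B}"
    unfolding shift_card[OF assms(1) BU, of x, symmetric]
    by (subst e2, rule card_Un_disjoint) (use finA finB assms(3) in auto)
  show ?thesis using c1 c2 by linarith
qed

lemma sum_q:
  fixes N :: nat and B :: "nat set"
  assumes "0 < N" "B \<subseteq> {0..<N}"
  shows "(\<Sum>x\<in>{0..<N}. card {y\<in>B. (x + y) mod N \<in> B}) = card B * card B"
proof -
  have finB: "finite B" using assms(2) finite_subset by blast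
  have "(\<Sum>x\<in>{0..<N}. card {y\<in>B. (x + y) mod N \<in> B})
      = (\<Sum>x\<in>{0..<N}. \<Sum>y\<in>B. if (x + y) mod N \<in> B then 1 else (0::nat))"
    using card_as_sum[OF finB] by simp
  also have "\<dots> = (\<Sum>y\<in>B. \<Sum>x\<in>{0..<N}. if (x + y) mod N \<in> B then 1 else (0::nat))"
    by (rule sum.swap)
  also have "\<dots> = (\<Sum>y\<in>B. card {x\<in>{0..<N}. (y + x) mod N \<in> B})"
    using card_as_sum[of "{0..<N}"] by (simp add: add.commute)
  also have "\<dots> = (\<Sum>y\<in>B. card B)"
    using shift_card[OF assms] by simp
  finally show ?thesis by simp
qed

lemma ST_sum:
  fixes N :: nat and A :: "nat set"
  assumes "finite A"
  shows "card {(x, y, z). x \<in> A \<and> y \<in> A \<and> z \<in> A \<and> (x + y) mod N = z}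
    = (\<Sum>x\<in>A. card {y\<in>A. (x + y) mod N \<in> A})"
proof -
  have eq: "{(x, y, z). x \<in> A \<and> y \<in> A \<and> z \<in> A \<and> (x + y) mod N = z}
     = (\<lambda>(x,y). (x, y, (x + y) mod N)) ` (SIGMA x:A. {y\<in>A. (x + y) mod N \<in> A})"
    by auto
  have inj: "inj_on (\<lambda>(x,y). (x, y, (x + y) mod N)) (SIGMA x:A. {y\<in>A. (x + y) mod N \<in> A})"
    by (auto simp: inj_on_def)
  show ?thesis unfolding eq card_image[OF inj]
    by (rule card_SigmaI) (use assms in auto)
qed

theorem theorem1p8:
  fixes n :: nat and A :: "nat set"
  assumes "n \<ge> 1"
    and "A \<subseteq> {0..<2 ^ n}"
    and "card A = 2 ^ (n - 1) + 1"
  shows "schur_triples n A \<ge> 3 * 2 ^ (n - 1)"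
proof -
  define N :: nat where "N = 2^n"
  define m :: nat where "m = 2^(n-1)"
  have Nm: "N = 2*m" unfolding N_def m_def using assms(1) by (cases n) auto
  have m1: "m \<ge> 1" unfolding m_def by simp
  have N0: "0 < N" unfolding N_def by simp
  define B where "B = {0..<N} - A"
  define q where "q x = card {y\<in>B. (x + y) mod N \<in> B}" for x
  have AU: "A \<subseteq> {0..<N}" using assms(2) unfolding N_def .
  have finA: "finite A" using AU finite_subset by blast
  have finB: "finite B" unfolding B_def by simp
  have BU: "B \<subseteq> {0..<N}" unfolding B_def by auto
  have cA: "card A = m + 1" using assms(3) unfolding m_def .
  have cB: "card B = m - 1" unfolding B_def using card_Diff_subset[OF finA AU] cA Nm by simp
  have fq: "card {y\<in>A. (x + y) mod N \<in> A} = q x + 2" for x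
    using f_eq[OF N0 AU B_def, of x] cA cB m1 unfolding q_def by linarith
  have ST: "schur_triples n A = (\<Sum>x\<in>A. q x) + 2 * (m + 1)"
    unfolding schur_triples_def N_def[symmetric] ST_sum[OF finA] fq
  proof -
    have "(\<Sum>x\<in>A. q x + 2) = (\<Sum>x\<in>A. q x) + (\<Sum>x\<in>A. 2)" by (rule sum.distrib)
    also have "(\<Sum>x\<in>A. (2::nat)) = 2 * (m + 1)" using cA by simp
    finally show "(\<Sum>x\<in>A. q x + 2) = (\<Sum>x\<in>A. q x) + 2 * (m + 1)" .
  qed
  have qle: "q x \<le> card B" for x unfolding q_def by (rule card_mono[OF finB]) auto
  have key: "(\<Sum>x\<in>A. q x) + 2 \<ge> m"
  proof (cases "0 \<in> A")
    case True
    have "q 0 = card B" unfolding q_def using BU by (intro arg_cong[where f=card]) auto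
    moreover have "q 0 \<le> (\<Sum>x\<in>A. q x)" by (rule member_le_sum[OF True]) (use finA in auto)
    ultimately show ?thesis using cB by linarith
  next
    case False
    then have B0: "0 \<in> B" unfolding B_def using N0 by auto
    then have "card B \<ge> 1" using finB by (metis Suc_leI One_nat_def card_gt_0_iff empty_iff)
    then have m2: "m \<ge> 2" using cB by linarith
    have "n \<ge> 2"
    proof (rule ccontr)
      assume "\<not> n \<ge> 2"
      then have "n = 1" using assms(1) by simp
      then show False using m2 unfolding m_def by simp
    qed
    then have "even m" unfolding m_def by (cases n) auto
    then have oddB: "odd (card B)" using cB m2 by simp
    have q0: "q 0 = card B" unfolding q_def using BU by (intro arg_cong[where f=card]) auto
    have qB: "q x \<le> card B - 1" if x: "x \<in> B - {0}" for x
    proof (rule ccontr)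
      assume "\<not> q x \<le> card B - 1"
      then have "q x = card B" using qle[of x] by linarith
      then have "{y\<in>B. (x + y) mod N \<in> B} = B" unfolding q_def
        by (intro card_subset_eq[OF finB]) auto
      then have cl: "\<forall>y\<in>B. (y + x) mod 2^n \<in> B" unfolding N_def by (auto simp: add.commute)
      have "0 < x" "x < 2^n" using x BU unfolding N_def by auto
      from closed_even[OF BU[unfolded N_def] this cl] oddB show False by simp
    qed
    have tot: "(\<Sum>x\<in>{0..<N}. q x) = card B * card B" unfolding q_def by (rule sum_q[OF N0 BU])
    have split: "{0..<N} = A \<union> B" using AU unfolding B_def by auto
    have "(\<Sum>x\<in>{0..<N}. q x) = (\<Sum>x\<in>A. q x) + (\<Sum>x\<in>B. q x)"
      unfolding split using finA finB by (subst sum.union_disjoint) (auto simp: B_def)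
    also have "(\<Sum>x\<in>B. q x) = q 0 + (\<Sum>x\<in>B - {0}. q x)" by (rule sum.remove[OF finB B0])
    finally have "(\<Sum>x\<in>{0..<N}. q x) = (\<Sum>x\<in>A. q x) + (q 0 + (\<Sum>x\<in>B - {0}. q x))" .
    moreover have "(\<Sum>x\<in>B - {0}. q x) \<le> (card B - 1) * (card B - 1)"
    proof -
      have "(\<Sum>x\<in>B - {0}. q x) \<le> card (B - {0}) * (card B - 1)"
        using sum_bounded_above[of "B - {0}" q "card B - 1"] qB by simp
      moreover have "card (B - {0}) = card B - 1" using B0 finB by simp
      ultimately show ?thesis by simp
    qed
    ultimately have ineq: "card B * card B \<le> (\<Sum>x\<in>A. q x) + card B + (card B - 1) * (card B - 1)"
      using tot q0 by linarith
    define c where "c = card B - 1"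
    have c: "card B = c + 1" using \<open>card B \<ge> 1\<close> unfolding c_def by simp
    have "(c+1)*(c+1) \<le> (\<Sum>x\<in>A. q x) + (c + 1) + c * c" using ineq c by simp
    then have "c \<le> (\<Sum>x\<in>A. q x)" by (simp add: algebra_simps)
    then show ?thesis using c cB by linarith
  qed
  show ?thesis unfolding ST using key m_def by simp
qed

end
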